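(* Let $G$ be an edge-magic 2-regular simple graph (in particular, an edge-magic bipartite 2-regular graph, i.e. a disjoint union of even cycles) and let $n\ge1$. Then $|\tau_{G\odot\overline{K}_n}|\ge (n+1)|\tau_G|+2$.
   Context: An edge-magic labeling of a $(p,q)$-graph $G$ (with $p$ vertices and $q$ edges) is a bijection $f:V(G)\cup E(G)\to[1,p+q]$ such that $f(x)+f(xy)+f(y)$ equals a constant $\mathrm{val}(f)$ (the valence) for every edge $xy$; $G$ is edge-magic if it has one. For a graph $H$, $\tau_H$ is the set of integers that are valences of edge-magic labelings of $H$. $G\odot\overline{K}_n$ (the corona, or crown when $G$ is a cycle) is the graph obtained from $G$ by attaching $n$ new pendant vertices to each vertex of $G$. *)

theory Defs
  imports Main
begin

definition simple_graph :: "'a set \<Rightarrow> 'a set set \<Rightarrow> bool" where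
  "simple_graph V E \<longleftrightarrow> finite V \<and>
     (\<forall>e\<in>E. \<exists>u v. e = {u, v} \<and> u \<noteq> v \<and> u \<in> V \<and> v \<in> V)"

definition degree :: "'a set set \<Rightarrow> 'a \<Rightarrow> nat" where
  "degree E v = card {e\<in>E. v \<in> e}"

definition two_regular :: "'a set \<Rightarrow> 'a set set \<Rightarrow> bool" where
  "two_regular V E \<longleftrightarrow> (\<forall>v\<in>V. degree E v = 2)"

definition edge_magic_labeling ::
  "'a set \<Rightarrow> 'a set set \<Rightarrow> ('a + 'a set \<Rightarrow> nat) \<Rightarrow> nat \<Rightarrow> bool" where
  "edge_magic_labeling V E f k \<longleftrightarrow>
     bij_betw f (Inl ` V \<union> Inr ` E) {1 .. card V + card E} \<and>
     (\<forall>x\<in>V. \<forall>y\<in>V. {x, y} \<in> E \<longrightarrow> f (Inl x) + f (Inr {x, y}) + f (Inl y) = k)"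

definition edge_magic :: "'a set \<Rightarrow> 'a set set \<Rightarrow> bool" where
  "edge_magic V E \<longleftrightarrow> (\<exists>f k. edge_magic_labeling V E f k)"

definition tau :: "'a set \<Rightarrow> 'a set set \<Rightarrow> nat set" where
  "tau V E = {k. \<exists>f. edge_magic_labeling V E f k}"

text \<open>Corona G \<odot> (complement of K_n): vertex (v,0) is the original v, vertices (v,i),
  1 \<le> i \<le> n, are the n pendant vertices attached to v.\<close>
definition corona_V :: "'a set \<Rightarrow> nat \<Rightarrow> ('a \<times> nat) set" where
  "corona_V V n = V \<times> {0..n}"

definition corona_E :: "'a set \<Rightarrow> 'a set set \<Rightarrow> nat \<Rightarrow> ('a \<times> nat) set set" where
  "corona_E V E n =
     {{(u, 0), (w, 0)} | u w. {u, w} \<in> E} \<union> {{(v, 0), (v, i)} | v i. v \<in> V \<and> 1 \<le> i \<and> i \<le> n}"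

end

theory Submission
  imports Defs
begin

lemma sum_swap_deg:
  assumes fE: "finite E" and fV: "finite V" and sub: "\<forall>e\<in>E. e \<subseteq> V"
  shows "(\<Sum>e\<in>E. \<Sum>x\<in>e. f x) = (\<Sum>v\<in>V. degree E v * (f v :: nat))"
proof -
  have "(\<Sum>e\<in>E. \<Sum>x\<in>e. f x) = (\<Sum>e\<in>E. \<Sum>x\<in>V. if x \<in> e then f x else 0)"
  proof (rule sum.cong[OF refl])
    fix e assume "e \<in> E"
    hence "e \<subseteq> V" using sub by auto
    thus "(\<Sum>x\<in>e. f x) = (\<Sum>x\<in>V. if x \<in> e then f x else 0)"
      using fV by (simp add: sum.If_cases Int_absorb1 inf.absorb2)
  qed
  also have "\<dots> = (\<Sum>x\<in>V. \<Sum>e\<in>E. if x \<in> e then f x else 0)"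
    by (rule sum.swap)
  also have "\<dots> = (\<Sum>v\<in>V. degree E v * f v)"
    unfolding degree_def using fE by (simp add: sum.If_cases Int_def)
  finally show ?thesis .
qed

lemma sg_basic:
  assumes "simple_graph V E"
  shows "finite V" "finite E" "\<forall>e\<in>E. e \<subseteq> V" "\<forall>e\<in>E. card e = 2"
proof -
  show fV: "finite V" using assms unfolding simple_graph_def by auto
  show sub: "\<forall>e\<in>E. e \<subseteq> V" using assms unfolding simple_graph_def by auto
  have "E \<subseteq> Pow V" using sub by auto
  thus "finite E" using fV finite_subset by blast
  show "\<forall>e\<in>E. card e = 2" using assms unfolding simple_graph_def by auto
qed

lemma card_E_eq:
  assumes "simple_graph V E" "two_regular V E"
  shows "card E = card V"
proof -
  note b = sg_basic[OF assms(1)]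
  have "(\<Sum>e\<in>E. \<Sum>x\<in>e. (1::nat)) = (\<Sum>v\<in>V. degree E v * 1)"
    by (rule sum_swap_deg) (use b in auto)
  also have "\<dots> = 2 * card V" using assms(2) unfolding two_regular_def by simp
  finally have "(\<Sum>e\<in>E. card e) = 2 * card V" by simp
  moreover have "(\<Sum>e\<in>E. card e) = 2 * card E" using b(4) by simp
  ultimately show ?thesis by simp
qed

lemma two_le_card:
  assumes "simple_graph V E" "two_regular V E" "V \<noteq> {}"
  shows "card V \<ge> 2"
proof -
  note b = sg_basic[OF assms(1)]
  obtain v where v: "v \<in> V" using assms(3) by auto
  hence "card {e\<in>E. v \<in> e} = 2" using assms(2) unfolding two_regular_def degree_def by auto
  then obtain e where "e \<in> E" "v \<in> e" by (metis (mono_tags, lifting) card.empty empty_Collect_eq zero_neq_numeral)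
  then obtain a b where "e = {a,b}" "a \<noteq> b" "a \<in> V" "b \<in> V" using assms(1) unfolding simple_graph_def by blast
  hence "{a,b} \<subseteq> V" by auto
  hence "card {a,b} \<le> card V" using b(1) card_mono by blast
  thus ?thesis using \<open>a \<noteq> b\<close> by simp
qed

lemma sdr_aux:
  assumes "card W = m" "finite W" "finite E"
    and pairs: "\<forall>e\<in>E. \<exists>a b. e = {a,b} \<and> a \<noteq> b"
    and inv: "\<forall>w\<in>W. card {e\<in>E. w \<in> e} \<ge> 2 \<or> (w = w0 \<and> card {e\<in>E. w \<in> e} \<ge> 1)"
  shows "\<exists>\<phi>. inj_on \<phi> W \<and> (\<forall>w\<in>W. w \<in> \<phi> w \<and> \<phi> w \<in> E)"
  using assms
proof (induction m arbitrary: W E w0)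
  case 0
  then show ?case by auto
next
  case (Suc m)
  have "W \<noteq> {}" using Suc.prems(1) by auto
  define w1 where "w1 = (if w0 \<in> W then w0 else (SOME w. w \<in> W))"
  have w1W: "w1 \<in> W" unfolding w1_def using \<open>W \<noteq> {}\<close> by (auto intro: someI_ex)
  have "card {e\<in>E. w1 \<in> e} \<ge> 2 \<or> (w1 = w0 \<and> card {e\<in>E. w1 \<in> e} \<ge> 1)" using Suc.prems(5) w1W by blast
  hence "card {e\<in>E. w1 \<in> e} \<ge> 1" by linarith
  hence "{e\<in>E. w1 \<in> e} \<noteq> {}" by (metis card.empty not_one_le_zero)
  then obtain e where e: "e \<in> E" "w1 \<in> e" by blast
  obtain a b where ab: "e = {a,b}" "a \<noteq> b" using Suc.prems(4) e(1) by blast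
  have "\<exists>u. e = {w1, u} \<and> u \<noteq> w1"
  proof (cases "w1 = a")
    case True thus ?thesis using ab by blast
  next
    case False hence "w1 = b" using ab e(2) by blast
    thus ?thesis using ab by (metis insert_commute)
  qed
  then obtain u where eu: "e = {w1, u}" "u \<noteq> w1" by blast
  have fE': "finite (E - {e})" using Suc.prems(3) by auto
  have inv': "\<forall>w\<in>W - {w1}. card {e'\<in>E - {e}. w \<in> e'} \<ge> 2 \<or> (w = u \<and> card {e'\<in>E - {e}. w \<in> e'} \<ge> 1)"
  proof
    fix w assume wW: "w \<in> W - {w1}"
    show "card {e'\<in>E - {e}. w \<in> e'} \<ge> 2 \<or> (w = u \<and> card {e'\<in>E - {e}. w \<in> e'} \<ge> 1)"
    proof (cases "w = u")
      case True
      have nw0: "w \<noteq> w0" using wW w1_def by auto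
      hence c2: "card {e\<in>E. w \<in> e} \<ge> 2" using Suc.prems(5) wW by auto
      have "{e'\<in>E - {e}. w \<in> e'} = {e\<in>E. w \<in> e} - {e}" by auto
      moreover have "e \<in> {e\<in>E. w \<in> e}" using True eu e by auto
      ultimately have "card {e'\<in>E - {e}. w \<in> e'} = card {e\<in>E. w \<in> e} - 1"
        using Suc.prems(3) by (simp add: card_Diff_singleton)
      then show ?thesis using c2 True by auto
    next
      case False
      have "{e'\<in>E - {e}. w \<in> e'} = {e\<in>E. w \<in> e}" using False wW eu by auto
      moreover have "w \<noteq> w0 \<or> w0 \<notin> W" using wW w1_def by auto
      ultimately show ?thesis using Suc.prems(5) wW by auto
    qed
  qed
  have "card (W - {w1}) = m" using Suc.prems(1) w1W by simp
  moreover have fW': "finite (W - {w1})" using Suc.prems(2) by blast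
  moreover have pairs': "\<forall>e'\<in>E - {e}. \<exists>a b. e' = {a,b} \<and> a \<noteq> b" using Suc.prems(4) by blast
  ultimately have "\<exists>\<phi>. inj_on \<phi> (W - {w1}) \<and> (\<forall>w\<in>W - {w1}. w \<in> \<phi> w \<and> \<phi> w \<in> E - {e})"
    using Suc.IH[OF _ _ fE' _ inv'] by blast
  then obtain \<phi> where phi: "inj_on \<phi> (W - {w1})" "\<forall>w\<in>W - {w1}. w \<in> \<phi> w \<and> \<phi> w \<in> E - {e}"
    by blast
  define \<phi>' where "\<phi>' = \<phi>(w1 := e)"
  have "inj_on \<phi>' W"
  proof (rule inj_onI)
    fix x y assume xy: "x \<in> W" "y \<in> W" "\<phi>' x = \<phi>' y"
    show "x = y"
    proof (cases "x = w1")
      case True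
      show ?thesis
      proof (rule ccontr)
        assume "x \<noteq> y"
        hence "y \<in> W - {w1}" using True xy by blast
        hence "\<phi> y \<noteq> e" using phi(2) by blast
        moreover have "\<phi>' y = \<phi> y" "\<phi>' x = e" using True \<open>y \<in> W - {w1}\<close> unfolding \<phi>'_def by auto
        ultimately show False using xy(3) by simp
      qed
    next
      case False
      show ?thesis
      proof (cases "y = w1")
        case True
        hence "x \<in> W - {w1}" using False xy by blast
        hence "\<phi> x \<noteq> e" using phi(2) by blast
        moreover have "\<phi>' x = \<phi> x" "\<phi>' y = e" using True False unfolding \<phi>'_def by auto
        ultimately show ?thesis using xy(3) by simp
      next
        case False2: False
        have "\<phi> x = \<phi> y" using xy(3) False False2 unfolding \<phi>'_def by simp
        thus ?thesis using inj_onD[OF phi(1)] xy False False2 by blast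
      qed
    qed
  qed
  moreover have "\<forall>w\<in>W. w \<in> \<phi>' w \<and> \<phi>' w \<in> E"
  proof
    fix w assume "w \<in> W"
    show "w \<in> \<phi>' w \<and> \<phi>' w \<in> E"
    proof (cases "w = w1")
      case True thus ?thesis using e unfolding \<phi>'_def by simp
    next
      case False
      hence "w \<in> \<phi> w \<and> \<phi> w \<in> E - {e}" using phi(2) \<open>w \<in> W\<close> by blast
      thus ?thesis using False unfolding \<phi>'_def by simp
    qed
  qed
  ultimately show ?case by (intro exI[of _ \<phi>'] conjI)
qed

lemma orientation:
  assumes sg: "simple_graph V E" and tr: "two_regular V E"
  shows "\<exists>\<phi> \<psi>. bij_betw \<phi> V E \<and> bij_betw \<psi> V V \<and> (\<forall>v\<in>V. \<phi> v = {v, \<psi> v} \<and> \<psi> v \<noteq> v)"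
proof -
  note b = sg_basic[OF sg]
  have pairs: "\<forall>e\<in>E. \<exists>a b. e = {a,b} \<and> a \<noteq> b" using sg unfolding simple_graph_def by blast
  have deg: "\<forall>v\<in>V. card {e\<in>E. v \<in> e} = 2" using tr unfolding two_regular_def degree_def by auto
  obtain \<phi> where phi: "inj_on \<phi> V" "\<forall>w\<in>V. w \<in> \<phi> w \<and> \<phi> w \<in> E"
    using sdr_aux[OF refl b(1) b(2) pairs, of undefined] deg by (metis order_refl)
  have "\<phi> ` V = E"
  proof (rule card_subset_eq[OF b(2)])
    show "\<phi> ` V \<subseteq> E" using phi by auto
    show "card (\<phi> ` V) = card E" using card_image[OF phi(1)] card_E_eq[OF sg tr] by simp
  qed
  hence bphi: "bij_betw \<phi> V E" using phi(1) unfolding bij_betw_def by auto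
  define \<psi> where "\<psi> v = (SOME u. \<phi> v = {v, u} \<and> u \<noteq> v)" for v
  have psi: "\<phi> v = {v, \<psi> v} \<and> \<psi> v \<noteq> v" if "v \<in> V" for v
  proof -
    have pvE: "\<phi> v \<in> E" using phi(2) that by blast
    obtain a c where ac: "\<phi> v = {a, c}" "a \<noteq> c" using bspec[OF pairs pvE] by blast
    have "v = a \<or> v = c" using ac phi(2) that by blast
    hence "\<exists>u. \<phi> v = {v, u} \<and> u \<noteq> v" using ac by (metis insert_commute)
    thus ?thesis unfolding \<psi>_def by (rule someI_ex)
  qed
  have psiV: "\<psi> v \<in> V" if "v \<in> V" for v
    using psi[OF that] phi(2) that b(3) by blast
  have injpsi: "inj_on \<psi> V"
  proof (rule inj_onI, rule ccontr)
    fix v w assume vw: "v \<in> V" "w \<in> V" "\<psi> v = \<psi> w" "v \<noteq> w"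
    define u where "u = \<psi> v"
    have uV: "u \<in> V" using psiV vw u_def by auto
    have e1: "\<phi> v = {v,u}" "\<phi> w = {w,u}" using psi vw u_def by auto
    have uv: "u \<noteq> v" "u \<noteq> w" using psi[OF vw(1)] psi[OF vw(2)] vw(3) u_def by simp_all
    have d: "\<phi> v \<noteq> \<phi> w" "\<phi> u \<noteq> \<phi> v" "\<phi> u \<noteq> \<phi> w"
      using inj_onD[OF phi(1)] vw uV uv by blast+
    have "{\<phi> u, \<phi> v, \<phi> w} \<subseteq> {e\<in>E. u \<in> e}" using phi(2) uV vw e1 by auto
    hence "card {\<phi> u, \<phi> v, \<phi> w} \<le> card {e\<in>E. u \<in> e}"
      using b(2) by (intro card_mono) auto
    moreover have "card {\<phi> u, \<phi> v, \<phi> w} = 3" using d by auto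
    ultimately show False using deg uV by auto
  qed
  have "\<psi> ` V = V"
    by (rule card_subset_eq[OF b(1)]) (use psiV card_image[OF injpsi] in auto)
  hence "bij_betw \<psi> V V" using injpsi unfolding bij_betw_def by auto
  show ?thesis
    apply (rule exI[of _ \<phi>], rule exI[of _ \<psi>])
    using bphi \<open>bij_betw \<psi> V V\<close> psi by blast
qed

lemma sum_1_to: "(\<Sum>i\<in>{1..m}. (i::nat)) * 2 = m * (m + 1)"
  using double_gauss_sum_from_Suc_0[of m, where 'a=nat] by simp

lemma magic_edge:
  assumes sg: "simple_graph V E" and lab: "edge_magic_labeling V E g k" and e: "e \<in> E"
  shows "k = g (Inr e) + (\<Sum>x\<in>e. g (Inl x))"
proof -
  obtain a b where ab: "e = {a,b}" "a \<noteq> b" "a \<in> V" "b \<in> V" using sg e unfolding simple_graph_def by blast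
  have "g (Inl a) + g (Inr {a,b}) + g (Inl b) = k" using lab ab e unfolding edge_magic_labeling_def by auto
  thus ?thesis using ab by simp
qed

lemma valence_eq:
  assumes sg: "simple_graph V E" and tr: "two_regular V E" and lab: "edge_magic_labeling V E g k"
  shows "card V * k = card V * (2 * card V + 1) + (\<Sum>v\<in>V. g (Inl v))"
proof -
  note b = sg_basic[OF sg]
  have cE: "card E = card V" by (rule card_E_eq[OF sg tr])
  have bij: "bij_betw g (Inl ` V \<union> Inr ` E) {1 .. card V + card E}"
    using lab unfolding edge_magic_labeling_def by auto
  have "(\<Sum>z\<in>Inl ` V \<union> Inr ` E. g z) = (\<Sum>i\<in>{1 .. card V + card E}. i)"
    using sum.reindex_bij_betw[OF bij, of id] by simp
  hence tot: "(\<Sum>z\<in>Inl ` V \<union> Inr ` E. g z) * 2 = (2 * card V) * (2 * card V + 1)"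
    using sum_1_to[of "card V + card E"] cE by (simp add: algebra_simps)
  have "(\<Sum>z\<in>Inl ` V \<union> Inr ` E. g z) = (\<Sum>z\<in>Inl ` V. g z) + (\<Sum>z\<in>Inr ` E. g z)"
    by (rule sum.union_disjoint) (use b in auto)
  also have "\<dots> = (\<Sum>v\<in>V. g (Inl v)) + (\<Sum>e\<in>E. g (Inr e))"
    by (simp add: sum.reindex)
  finally have tot2: "(\<Sum>z\<in>Inl ` V \<union> Inr ` E. g z) = (\<Sum>v\<in>V. g (Inl v)) + (\<Sum>e\<in>E. g (Inr e))" .
  have "card V * k = (\<Sum>e\<in>E. k)" using cE by simp
  also have "\<dots> = (\<Sum>e\<in>E. g (Inr e) + (\<Sum>x\<in>e. g (Inl x)))"
    using magic_edge[OF sg lab] by (intro sum.cong) auto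
  also have "\<dots> = (\<Sum>e\<in>E. g (Inr e)) + (\<Sum>e\<in>E. \<Sum>x\<in>e. g (Inl x))"
    by (simp add: sum.distrib)
  also have "(\<Sum>e\<in>E. \<Sum>x\<in>e. g (Inl x)) = (\<Sum>v\<in>V. degree E v * g (Inl v))"
    by (rule sum_swap_deg) (use b in auto)
  also have "\<dots> = (\<Sum>v\<in>V. 2 * g (Inl v))"
    using tr unfolding two_regular_def by (intro sum.cong) auto
  finally have "card V * k = (\<Sum>e\<in>E. g (Inr e)) + 2 * (\<Sum>v\<in>V. g (Inl v))"
    by (simp add: sum_distrib_left)
  with tot tot2 show ?thesis by (simp add: algebra_simps)
qed

lemma valence_bounds:
  assumes sg: "simple_graph V E" and tr: "two_regular V E" and ne: "V \<noteq> {}"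
    and lab: "edge_magic_labeling V E g k"
  shows "2 * card V + 2 < k" "k < 4 * card V + 1"
proof -
  note b = sg_basic[OF sg]
  define p where "p = card V"
  have p2: "p \<ge> 2" using two_le_card[OF sg tr ne] p_def by simp
  have cE: "card E = card V" by (rule card_E_eq[OF sg tr])
  have bij: "bij_betw g (Inl ` V \<union> Inr ` E) {1 .. card V + card E}"
    using lab unfolding edge_magic_labeling_def by auto
  have rng: "g (Inl v) \<in> {1..2*p}" if "v \<in> V" for v
  proof -
    have "g (Inl v) \<in> {1 .. card V + card E}" using bij_betwE[OF bij] that by blast
    thus ?thesis using cE p_def by simp
  qed
  have inj: "inj_on (\<lambda>v. g (Inl v)) V"
    using bij_betw_imp_inj_on[OF bij] unfolding inj_on_def by auto
  have "\<not> card V \<le> Suc 0" using p2 p_def by simp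
  hence "\<not> (\<forall>a\<in>V. \<forall>c\<in>V. a = c)" using card_le_Suc0_iff_eq[OF b(1)] by blast
  then obtain a c where ac: "a \<in> V" "c \<in> V" "a \<noteq> c" by blast
  have gac: "g (Inl a) \<noteq> g (Inl c)" using inj ac unfolding inj_on_def by blast
  have eq: "p * k = p * (2 * p + 1) + (\<Sum>v\<in>V. g (Inl v))"
    using valence_eq[OF sg tr lab] p_def by simp
  have "(\<Sum>v\<in>V. 1) < (\<Sum>v\<in>V. g (Inl v))"
  proof (rule sum_strict_mono_ex1[OF b(1)])
    show "\<forall>v\<in>V. 1 \<le> g (Inl v)" using rng by auto
    show "\<exists>v\<in>V. 1 < g (Inl v)" using gac ac rng by (metis atLeastAtMost_iff le_neq_implies_less)
  qed
  hence s1: "p < (\<Sum>v\<in>V. g (Inl v))" using p_def by simp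
  have "(\<Sum>v\<in>V. g (Inl v)) < (\<Sum>v\<in>V. 2 * p)"
  proof (rule sum_strict_mono_ex1[OF b(1)])
    show "\<forall>v\<in>V. g (Inl v) \<le> 2 * p" using rng by auto
    show "\<exists>v\<in>V. g (Inl v) < 2 * p" using gac ac rng by (metis atLeastAtMost_iff le_neq_implies_less)
  qed
  hence s2: "(\<Sum>v\<in>V. g (Inl v)) < p * (2 * p)" using p_def by simp
  have "p * (2 * p + 2) < p * k" using eq s1 by (simp add: algebra_simps)
  hence "2 * p + 2 < k" by (metis mult_less_cancel1)
  thus "2 * card V + 2 < k" using p_def by simp
  have "p * k < p * (4 * p + 1)" using eq s2 by (simp add: algebra_simps)
  hence "k < 4 * p + 1" by (metis mult_less_cancel1)
  thus "k < 4 * card V + 1" using p_def by simp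
qed

definition uu :: "nat \<Rightarrow> nat \<Rightarrow> nat" where
  "uu r i = (if i \<le> r then i - 1 else i)"

lemma uu_props:
  assumes "r \<le> n" "i \<in> {1..n}"
  shows "uu r i \<noteq> r" "uu r i \<le> n"
  using assms unfolding uu_def by auto

lemma uu_inj: "inj_on (uu r) {1..n}"
  unfolding uu_def inj_on_def by auto

lemma uu_surj:
  assumes "r \<le> n" "t \<le> n" "t \<noteq> r"
  shows "\<exists>i\<in>{1..n}. uu r i = t"
proof (cases "t < r")
  case True
  hence "uu r (t+1) = t" "t + 1 \<in> {1..n}" using assms unfolding uu_def by auto
  thus ?thesis by blast
next
  case False
  hence "uu r t = t" "t \<in> {1..n}" using assms unfolding uu_def by auto
  thus ?thesis by blast
qed

lemma sum3:
  fixes P1 P2 P3 d a b x1 x2 x3 t1 t2 t3 k m K :: nat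
  assumes "P1 + d = a*x1 + b*t1" "P2 + d = a*x2 + b*t2" "P3 + d = a*x3 + b*t3"
    "x1 + x2 + x3 = k" "t1 + t2 + t3 = m" "K + 3*d = a*k + b*m"
  shows "P1 + P2 + P3 = K"
proof -
  have "(P1 + P2 + P3) + 3*d = a*(x1+x2+x3) + b*(t1+t2+t3)"
    using assms(1-3) by (simp add: algebra_simps)
  thus ?thesis using assms(4-6) by simp
qed

definition bt :: "('a + 'a set \<Rightarrow> nat) \<Rightarrow> ('a \<Rightarrow> 'a set) \<Rightarrow> ('a \<Rightarrow> 'a) \<Rightarrow> nat \<Rightarrow> nat
    \<Rightarrow> ('a \<times> nat) + ('a \<times> nat) set \<Rightarrow> nat \<times> nat" where
  "bt g \<phi> \<psi> n r z = (case z of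
      Inl (v, i) \<Rightarrow> (if i = 0 then (g (Inl v), r) else (g (Inl (\<psi> v)), uu r i))
    | Inr e \<Rightarrow> (if (\<forall>x\<in>e. snd x = 0) then (g (Inr (fst ` e)), n - r)
               else (g (Inr (\<phi> (fst (SOME x. x \<in> e \<and> snd x \<noteq> 0)))),
                     n - uu r (snd (SOME x. x \<in> e \<and> snd x \<noteq> 0)))))"

lemma bt_simps:
  shows "bt g \<phi> \<psi> n r (Inl (v, 0)) = (g (Inl v), r)"
    and "i \<noteq> 0 \<Longrightarrow> bt g \<phi> \<psi> n r (Inl (v, i)) = (g (Inl (\<psi> v)), uu r i)"
    and "bt g \<phi> \<psi> n r (Inr {(u,0),(w,0)}) = (g (Inr {u,w}), n - r)"
    and "i \<noteq> 0 \<Longrightarrow> bt g \<phi> \<psi> n r (Inr {(v,0),(v,i)}) = (g (Inr (\<phi> v)), n - uu r i)"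
proof -
  show "bt g \<phi> \<psi> n r (Inl (v, 0)) = (g (Inl v), r)" unfolding bt_def by simp
  show "i \<noteq> 0 \<Longrightarrow> bt g \<phi> \<psi> n r (Inl (v, i)) = (g (Inl (\<psi> v)), uu r i)" unfolding bt_def by simp
  show "bt g \<phi> \<psi> n r (Inr {(u,0),(w,0)}) = (g (Inr {u,w}), n - r)" unfolding bt_def by simp
  assume i: "i \<noteq> 0"
  have "(SOME x. x \<in> {(v,0),(v,i)} \<and> snd x \<noteq> 0) = (v, i)"
    by (rule some_equality) (use i in auto)
  thus "bt g \<phi> \<psi> n r (Inr {(v,0),(v,i)}) = (g (Inr (\<phi> v)), n - uu r i)"
    unfolding bt_def using i by simp
qed

lemma corona_forms:
  assumes "z \<in> Inl ` corona_V V n \<union> Inr ` corona_E V E n"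
  shows "(\<exists>v\<in>V. z = Inl (v,0)) \<or> (\<exists>v\<in>V. \<exists>i\<in>{1..n}. z = Inl (v,i))
    \<or> (\<exists>u w. {u,w} \<in> E \<and> z = Inr {(u,0),(w,0)}) \<or> (\<exists>v\<in>V. \<exists>i\<in>{1..n}. z = Inr {(v,0),(v,i)})"
proof -
  consider (a) x where "x \<in> corona_V V n" "z = Inl x" | (b) e where "e \<in> corona_E V E n" "z = Inr e"
    using assms by blast
  then show ?thesis
  proof cases
    case a
    then obtain v i where "x = (v,i)" "v \<in> V" "i \<le> n" unfolding corona_V_def by auto
    then show ?thesis using a by (cases "i = 0") auto
  next
    case b
    then consider (c) u w where "e = {(u,0),(w,0)}" "{u,w} \<in> E"
      | (p) v i where "e = {(v,0),(v,i)}" "v \<in> V" "1 \<le> i" "i \<le> n"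
      unfolding corona_E_def by blast
    then show ?thesis
    proof cases
      case c
      hence "\<exists>u w. {u,w} \<in> E \<and> z = Inr {(u,0),(w,0)}" using b(2) by blast
      thus ?thesis by blast
    next
      case p
      hence "i \<in> {1..n}" "z = Inr {(v,0),(v,i)}" using b(2) by auto
      hence "\<exists>v\<in>V. \<exists>i\<in>{1..n}. z = Inr {(v,0),(v,i)}" using p(2) by blast
      thus ?thesis by blast
    qed
  qed
qed

context
  fixes V :: "'a set" and E :: "'a set set" and g :: "'a + 'a set \<Rightarrow> nat" and k :: nat
    and \<phi> :: "'a \<Rightarrow> 'a set" and \<psi> :: "'a \<Rightarrow> 'a" and n r :: nat
  assumes sg: "simple_graph V E" and tr: "two_regular V E" and lab: "edge_magic_labeling V E g k"
    and bphi: "bij_betw \<phi> V E" and bpsi: "bij_betw \<psi> V V"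
    and phipsi: "\<forall>v\<in>V. \<phi> v = {v, \<psi> v} \<and> \<psi> v \<noteq> v"
    and rn: "r \<le> n"
begin

lemma cE: "card E = card V" using card_E_eq[OF sg tr] .

lemma gbij: "bij_betw g (Inl ` V \<union> Inr ` E) {1 .. 2 * card V}"
  using lab cE unfolding edge_magic_labeling_def by (simp add: mult_2)

lemma gInl: "v \<in> V \<Longrightarrow> g (Inl v) \<in> {1..2 * card V}"
  using bij_betwE[OF gbij] by blast

lemma gInr: "e \<in> E \<Longrightarrow> g (Inr e) \<in> {1..2 * card V}"
  using bij_betwE[OF gbij] by blast

lemma card_cEH: "card (corona_E V E n) \<le> card V + card V * n" and fin_cEH: "finite (corona_E V E n)"
proof -
  note b = sg_basic[OF sg]
  define C where "C = {{(u, 0::nat), (w, 0)} | u w. {u, w} \<in> E}"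
  define P where "P = {{(v, 0::nat), (v, i)} | v i. v \<in> V \<and> 1 \<le> i \<and> i \<le> n}"
  have C: "C \<subseteq> (\<lambda>e. (\<lambda>x. (x, 0::nat)) ` e) ` E"
  proof
    fix c assume "c \<in> C"
    then obtain u w where uw: "c = {(u,0),(w,0)}" "{u,w} \<in> E" unfolding C_def by blast
    hence "c = (\<lambda>x. (x, 0::nat)) ` {u,w}" by simp
    thus "c \<in> (\<lambda>e. (\<lambda>x. (x, 0::nat)) ` e) ` E" using uw(2) by (rule image_eqI)
  qed
  have P: "P \<subseteq> (\<lambda>(v,i). {(v, 0::nat), (v, i)}) ` (V \<times> {1..n})"
  proof
    fix c assume "c \<in> P"
    then obtain v i where vi: "c = {(v,0),(v,i)}" "v \<in> V" "1 \<le> i" "i \<le> n" unfolding P_def by blast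
    hence "c = (\<lambda>(v,i). {(v, 0::nat), (v, i)}) (v,i)" "(v,i) \<in> V \<times> {1..n}" by auto
    thus "c \<in> (\<lambda>(v,i). {(v, 0::nat), (v, i)}) ` (V \<times> {1..n})" by (rule image_eqI)
  qed
  have fC: "finite C" using finite_surj[OF b(2) C] .
  have fP: "finite P" using finite_surj[OF _ P] b(1) by blast
  have "card C \<le> card V"
    using card_mono[OF finite_imageI[OF b(2)] C] card_image_le[OF b(2), of "\<lambda>e. (\<lambda>x. (x, 0::nat)) ` e"] cE
    by linarith
  moreover have "card P \<le> card V * n"
  proof -
    have "card P \<le> card ((\<lambda>(v,i). {(v, 0::nat), (v, i)}) ` (V \<times> {1..n}))"
      using card_mono[OF finite_imageI P] b(1) by blast
    also have "\<dots> \<le> card (V \<times> {1..n})" using b(1) by (intro card_image_le) blast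
    also have "\<dots> = card V * n" by (simp add: card_cartesian_product)
    finally show ?thesis .
  qed
  moreover have "corona_E V E n = C \<union> P" unfolding corona_E_def C_def P_def by blast
  ultimately show "card (corona_E V E n) \<le> card V + card V * n"
    using card_Un_le[of C P] by simp
  show "finite (corona_E V E n)" using fC fP \<open>corona_E V E n = C \<union> P\<close> by simp
qed

abbreviation "DH \<equiv> Inl ` corona_V V n \<union> Inr ` corona_E V E n"

lemma psiV: "v \<in> V \<Longrightarrow> \<psi> v \<in> V" using bij_betwE[OF bpsi] by blast
lemma phiE: "v \<in> V \<Longrightarrow> \<phi> v \<in> E" using bij_betwE[OF bphi] by blast

lemma bt_into:
  assumes "z \<in> DH"
  shows "bt g \<phi> \<psi> n r z \<in> {1..2*card V} \<times> {0..n}"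
  using corona_forms[OF assms]
proof (elim disjE exE bexE conjE)
  fix v assume "v \<in> V" "z = Inl (v, 0)"
  thus ?thesis using gInl rn by (simp add: bt_simps)
next
  fix v i assume "v \<in> V" "i \<in> {1..n}" "z = Inl (v, i)"
  thus ?thesis using gInl[OF psiV] uu_props[OF rn] by (simp add: bt_simps)
next
  fix u w assume "{u,w} \<in> E" "z = Inr {(u,0),(w,0)}"
  thus ?thesis using gInr by (simp add: bt_simps)
next
  fix v i assume "v \<in> V" "i \<in> {1..n}" "z = Inr {(v,0),(v,i)}"
  thus ?thesis using gInr[OF phiE] by (simp add: bt_simps)
qed

lemma bt_surj:
  assumes "x \<in> {1..2*card V}" "t \<in> {0..n}"
  shows "\<exists>z\<in>DH. bt g \<phi> \<psi> n r z = (x, t)"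
proof -
  have "x \<in> g ` (Inl ` V \<union> Inr ` E)" using assms(1) gbij unfolding bij_betw_def by simp
  then obtain z0 where z0: "z0 \<in> Inl ` V \<union> Inr ` E" "x = g z0" by blast
  show ?thesis
  proof (cases z0)
    case (Inl w)
    hence wV: "w \<in> V" using z0 by auto
    show ?thesis
    proof (cases "t = r")
      case True
      have "Inl (w, 0) \<in> DH" using wV unfolding corona_V_def by auto
      moreover have "bt g \<phi> \<psi> n r (Inl (w, 0)) = (x, t)" using True Inl z0 by (simp add: bt_simps)
      ultimately show ?thesis by blast
    next
      case False
      obtain i where i: "i \<in> {1..n}" "uu r i = t" using uu_surj[OF rn _ False] assms(2) by auto
      have "w \<in> \<psi> ` V" using bpsi wV unfolding bij_betw_def by simp
      then obtain v where v: "v \<in> V" "w = \<psi> v" by blast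
      have "Inl (v, i) \<in> DH" using v i unfolding corona_V_def by auto
      moreover have "bt g \<phi> \<psi> n r (Inl (v, i)) = (x, t)" using i v Inl z0 by (simp add: bt_simps)
      ultimately show ?thesis by blast
    qed
  next
    case (Inr e)
    hence eE: "e \<in> E" using z0 by auto
    show ?thesis
    proof (cases "t = n - r")
      case True
      obtain a c where ac: "e = {a, c}" using sg eE unfolding simple_graph_def by blast
      have "{(a,0::nat),(c,0)} \<in> corona_E V E n" unfolding corona_E_def using ac eE by blast
      hence "Inr {(a,0::nat),(c,0)} \<in> DH" by blast
      moreover have "bt g \<phi> \<psi> n r (Inr {(a,0),(c,0)}) = (x, t)" using True Inr z0 ac by (simp add: bt_simps)
      ultimately show ?thesis by blast
    next
      case False
      have "n - t \<noteq> r" "n - t \<le> n" using False assms(2) rn by auto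
      then obtain i where i: "i \<in> {1..n}" "uu r i = n - t" using uu_surj[OF rn] by blast
      have "e \<in> \<phi> ` V" using bphi eE unfolding bij_betw_def by simp
      then obtain v where v: "v \<in> V" "e = \<phi> v" by blast
      have "{(v,0::nat),(v,i)} \<in> corona_E V E n" unfolding corona_E_def using v i by auto
      hence "Inr {(v,0::nat),(v,i)} \<in> DH" by blast
      moreover have "n - uu r i = t" using i assms(2) by simp
      moreover have "bt g \<phi> \<psi> n r (Inr {(v,0),(v,i)}) = (x, n - uu r i)"
        using i v Inr z0 by (simp add: bt_simps)
      ultimately show ?thesis by auto
    qed
  qed
qed

lemma bt_image: "bt g \<phi> \<psi> n r ` DH = {1..2*card V} \<times> {0..n}"
proof
  show "bt g \<phi> \<psi> n r ` DH \<subseteq> {1..2*card V} \<times> {0..n}" using bt_into by blast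
  show "{1..2*card V} \<times> {0..n} \<subseteq> bt g \<phi> \<psi> n r ` DH"
  proof
    fix y assume "y \<in> {1..2*card V} \<times> {0..n}"
    then obtain x t where "y = (x,t)" "x \<in> {1..2*card V}" "t \<in> {0..n}" by blast
    thus "y \<in> bt g \<phi> \<psi> n r ` DH" using bt_surj by (metis imageI)
  qed
qed

lemma card_Dom: "card ({1..2*card V} \<times> {0..n}) = 2 * card V * (n + 1)"
  by (simp add: card_cartesian_product)

lemma card_DH: "finite DH" "card DH = card (corona_V V n) + card (corona_E V E n)"
  "card (corona_V V n) = card V * (n + 1)"
proof -
  note b = sg_basic[OF sg]
  have fV: "finite (corona_V V n)" unfolding corona_V_def using b(1) by simp
  show "finite DH" using fV fin_cEH by simp
  show "card DH = card (corona_V V n) + card (corona_E V E n)"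
    using fV fin_cEH by (subst card_Un_disjoint) (auto simp: card_image)
  show "card (corona_V V n) = card V * (n + 1)" unfolding corona_V_def by (simp add: card_cartesian_product)
qed

lemma card_DH_eq: "card DH = 2 * card V * (n + 1)" and bt_inj: "inj_on (bt g \<phi> \<psi> n r) DH"
proof -
  have le: "card DH \<le> 2 * card V * (n + 1)"
    using card_DH(2,3) card_cEH by (simp add: algebra_simps)
  have "card (bt g \<phi> \<psi> n r ` DH) = 2 * card V * (n + 1)" using bt_image card_Dom by simp
  moreover have "card (bt g \<phi> \<psi> n r ` DH) \<le> card DH" using card_image_le[OF card_DH(1)] .
  ultimately show eq: "card DH = 2 * card V * (n + 1)" using le by linarith
  show "inj_on (bt g \<phi> \<psi> n r) DH"
    by (rule eq_card_imp_inj_on[OF card_DH(1)]) (use eq \<open>card (bt g \<phi> \<psi> n r ` DH) = _\<close> in simp)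
qed

lemma construct:
  fixes F :: "nat \<Rightarrow> nat \<Rightarrow> nat" and a b d K :: nat
  assumes injF: "inj_on (\<lambda>(x,t). F x t) ({1..2*card V} \<times> {0..n})"
    and rngF: "\<And>x t. x \<in> {1..2*card V} \<Longrightarrow> t \<le> n \<Longrightarrow> F x t \<in> {1..2*card V*(n+1)}"
    and linF: "\<And>x t. x \<in> {1..2*card V} \<Longrightarrow> t \<le> n \<Longrightarrow> F x t + d = a*x + b*t"
    and KK: "K + 3*d = a*k + b*(n+r)"
  shows "K \<in> tau (corona_V V n) (corona_E V E n)"
proof -
  define h where "h z = (case bt g \<phi> \<psi> n r z of (x,t) \<Rightarrow> F x t)" for z
  have hc: "h = (\<lambda>(x,t). F x t) \<circ> bt g \<phi> \<psi> n r" unfolding h_def by auto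
  have injh: "inj_on h DH"
    unfolding hc by (rule comp_inj_on[OF bt_inj]) (simp only: bt_image injF)
  have himg: "h ` DH = (\<lambda>(x,t). F x t) ` ({1..2*card V} \<times> {0..n})"
    unfolding hc image_comp[symmetric] bt_image ..
  have "h ` DH = {1..2*card V*(n+1)}"
  proof (rule card_subset_eq)
    show "finite {1..2*card V*(n+1)}" by simp
    show "h ` DH \<subseteq> {1..2*card V*(n+1)}" unfolding himg using rngF by auto
    show "card (h ` DH) = card {1..2*card V*(n+1)}"
      unfolding himg using card_image[OF injF] card_Dom by simp
  qed
  hence bij: "bij_betw h DH {1 .. card (corona_V V n) + card (corona_E V E n)}"
    using injh card_DH(2) card_DH_eq unfolding bij_betw_def by simp
  have gk: "g (Inl x) + g (Inr {x, y}) + g (Inl y) = k" if "x \<in> V" "y \<in> V" "{x,y} \<in> E" for x y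
    using lab that unfolding edge_magic_labeling_def by blast
  have magic: "h (Inl x) + h (Inr {x, y}) + h (Inl y) = K"
    if xy: "x \<in> corona_V V n" "y \<in> corona_V V n" "{x, y} \<in> corona_E V E n" for x y
  proof -
    consider (c) u w where "{x,y} = {(u,0),(w,0)}" "{u,w} \<in> E"
      | (p) v i where "{x,y} = {(v,0),(v,i)}" "v \<in> V" "1 \<le> i" "i \<le> n"
      using xy(3) unfolding corona_E_def by blast
    then show ?thesis
    proof cases
      case c
      have uwV: "u \<in> V" "w \<in> V" using c(2) sg_basic(3)[OF sg] by auto
      have S: "h (Inl (u,0)) + h (Inr {(u,0),(w,0)}) + h (Inl (w,0)) = K"
        unfolding h_def
      proof (simp add: bt_simps, rule sum3)
        show "F (g (Inl u)) r + d = a * g (Inl u) + b * r" using linF gInl uwV rn by blast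
        show "F (g (Inr {u,w})) (n - r) + d = a * g (Inr {u,w}) + b * (n - r)" using linF gInr c(2) by simp
        show "F (g (Inl w)) r + d = a * g (Inl w) + b * r" using linF gInl uwV rn by blast
        show "g (Inl u) + g (Inr {u,w}) + g (Inl w) = k" using gk uwV c(2) by blast
        show "r + (n - r) + r = n + r" using rn by simp
        show "K + 3 * d = a * k + b * (n + r)" by (rule KK)
      qed
      have S': "h (Inl (w,0)) + h (Inr {(u,0),(w,0)}) + h (Inl (u,0)) = K" using S by simp
      have "(x = (u,0) \<and> y = (w,0)) \<or> (x = (w,0) \<and> y = (u,0))"
        using c(1) by (metis doubleton_eq_iff)
      then show ?thesis
      proof
        assume "x = (u,0) \<and> y = (w,0)" thus ?thesis using S by simp
      next
        assume "x = (w,0) \<and> y = (u,0)" thus ?thesis using S' c(1) by (simp add: insert_commute)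
      qed
    next
      case p
      have i0: "i \<noteq> 0" "i \<in> {1..n}" using p by auto
      have S: "h (Inl (v,0)) + h (Inr {(v,0),(v,i)}) + h (Inl (v,i)) = K"
        unfolding h_def
      proof (simp add: bt_simps i0(1), rule sum3)
        show "F (g (Inl v)) r + d = a * g (Inl v) + b * r" using linF gInl p(2) rn by blast
        show "F (g (Inr (\<phi> v))) (n - uu r i) + d = a * g (Inr (\<phi> v)) + b * (n - uu r i)"
          using linF gInr phiE p(2) by simp
        show "F (g (Inl (\<psi> v))) (uu r i) + d = a * g (Inl (\<psi> v)) + b * (uu r i)"
          using linF gInl psiV p(2) uu_props[OF rn i0(2)] by blast
        show "g (Inl v) + g (Inr (\<phi> v)) + g (Inl (\<psi> v)) = k"
          using gk[of v "\<psi> v"] p(2) psiV phiE phipsi by auto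
        show "r + (n - uu r i) + uu r i = n + r" using uu_props[OF rn i0(2)] by simp
        show "K + 3 * d = a * k + b * (n + r)" by (rule KK)
      qed
      have S': "h (Inl (v,i)) + h (Inr {(v,0),(v,i)}) + h (Inl (v,0)) = K" using S by simp
      have "(x = (v,0) \<and> y = (v,i)) \<or> (x = (v,i) \<and> y = (v,0))"
        using p(1) by (metis doubleton_eq_iff)
      then show ?thesis
      proof
        assume "x = (v,0) \<and> y = (v,i)" thus ?thesis using S by simp
      next
        assume "x = (v,i) \<and> y = (v,0)" thus ?thesis using S' p(1) by (simp add: insert_commute)
      qed
    qed
  qed
  have "edge_magic_labeling (corona_V V n) (corona_E V E n) h K"
    unfolding edge_magic_labeling_def using bij magic by blast
  thus ?thesis unfolding tau_def by blast
qed

end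

lemma divmod_uniq:
  fixes m x x' t t' :: nat
  assumes "t < m" "t' < m" "m*x + t = m*x' + t'"
  shows "x = x' \<and> t = t'"
proof -
  have "(m*x + t) div m = x" using assms(1) by simp
  moreover have "(m*x' + t') div m = x'" using assms(2) by simp
  moreover have "(m*x + t) mod m = t" using assms(1) by simp
  moreover have "(m*x' + t') mod m = t'" using assms(2) by simp
  ultimately show ?thesis using assms(3) by metis
qed

lemma block_inj: "inj_on (\<lambda>(x,t). (n+1)*x + t - n) ({1..2*p} \<times> {0..n::nat})"
proof (rule inj_onI, clarify)
  fix x t x' t' :: nat
  assume a: "x \<in> {1..2*p}" "t \<in> {0..n}" "x' \<in> {1..2*p}" "t' \<in> {0..n}" "(n+1)*x + t - n = (n+1)*x' + t' - n"
  have "n+1 \<le> (n+1)*x" "n+1 \<le> (n+1)*x'" using a mult_le_mono2[of 1 x "n+1"] mult_le_mono2[of 1 x' "n+1"] by simp_all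
  hence "(n+1)*x + t = (n+1)*x' + t'" using a(5) by linarith
  thus "x = x' \<and> t = t'" using divmod_uniq[of t "n+1" t' x x'] a by auto
qed

lemma block_rng: "x \<in> {1..2*p} \<Longrightarrow> t \<le> n \<Longrightarrow> (n+1)*x + t - n \<in> {1..2*p*(n+1::nat)}"
proof -
  assume a: "x \<in> {1..2*p}" "t \<le> n"
  have "n+1 \<le> (n+1)*x" using a mult_le_mono2[of 1 x "n+1"] by simp
  moreover have "(n+1)*x \<le> (n+1)*(2*p)" using a mult_le_mono2[of x "2*p" "n+1"] by simp
  moreover have "(n+1)*(2*p) = 2*p*(n+1)" by simp
  ultimately show ?thesis using a(2) unfolding atLeastAtMost_iff by arith
qed

lemma block_lin: "x \<in> {1..2*p} \<Longrightarrow> t \<le> n \<Longrightarrow> (n+1)*x + t - n + n = (n+1)*x + 1*(t::nat)"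
proof -
  assume a: "x \<in> {1..2*p}" "t \<le> n"
  have "n+1 \<le> (n+1)*x" using a mult_le_mono2[of 1 x "n+1"] by simp
  thus ?thesis by simp
qed

lemma layer_inj: "inj_on (\<lambda>(x,t). x + 2*p*t) ({1..2*p} \<times> {0..n::nat})"
proof (rule inj_onI, clarify)
  fix x t x' t' :: nat
  assume a: "x \<in> {1..2*p}" "t \<in> {0..n}" "x' \<in> {1..2*p}" "t' \<in> {0..n}" "x + 2*p*t = x' + 2*p*t'"
  have "(2*p)*t + (x - 1) = (2*p)*t' + (x' - 1)" using a by auto
  hence "t = t' \<and> x - 1 = x' - 1" using divmod_uniq[of "x-1" "2*p" "x'-1" t t'] a by auto
  thus "x = x' \<and> t = t'" using a by auto
qed

lemma layer_rng: "x \<in> {1..2*p} \<Longrightarrow> t \<le> n \<Longrightarrow> x + 2*p*t \<in> {1..2*p*(n+1::nat)}"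
proof -
  assume a: "x \<in> {1..2*p}" "t \<le> n"
  have "2*p*t \<le> 2*p*n" using a by auto
  moreover have "x \<le> 2*p" using a by simp
  ultimately have "x + 2*p*t \<le> 2*p + 2*p*n" by linarith
  moreover have "2*p*(n+1) = 2*p + 2*p*n" by (simp add: algebra_simps)
  ultimately show ?thesis using a by simp
qed

lemma layer_lin: "x \<in> {1..2*p} \<Longrightarrow> t \<le> n \<Longrightarrow> x + 2*p*t + 0 = 1*x + 2*p*(t::nat)"
  by simp

theorem mainTheorem4:
  fixes V :: "'a set" and E :: "'a set set" and n :: nat
  assumes "simple_graph V E"
    and "V \<noteq> {}"
    and "two_regular V E"
    and "edge_magic V E"
    and "n \<ge> 1"
  shows "card (tau (corona_V V n) (corona_E V E n)) \<ge> (n + 1) * card (tau V E) + 2"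
proof -
  note b = sg_basic[OF assms(1)]
  define p where "p = card V"
  obtain \<phi> \<psi> where ori: "bij_betw \<phi> V E" "bij_betw \<psi> V V" "\<forall>v\<in>V. \<phi> v = {v, \<psi> v} \<and> \<psi> v \<noteq> v"
    using orientation[OF assms(1,3)] by blast
  define TG where "TG = tau V E"
  define TH where "TH = tau (corona_V V n) (corona_E V E n)"
  have bnd: "2*p + 2 < k \<and> k < 4*p + 1" if kT: "k \<in> TG" for k
  proof -
    obtain g where "edge_magic_labeling V E g k" using kT unfolding TG_def tau_def by blast
    thus ?thesis using valence_bounds[OF assms(1,3,2)] p_def by blast
  qed
  have finTG: "finite TG"
  proof (rule finite_subset)
    show "TG \<subseteq> {..4*p}" using bnd by fastforce
  qed simp
  have neTG: "TG \<noteq> {}" using assms(4) unfolding edge_magic_def TG_def tau_def by blast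
  have blk: "(n+1)*k + r - 2*n \<in> TH" if kT: "k \<in> TG" "r \<le> n" for k r
  proof -
    obtain g where lab: "edge_magic_labeling V E g k" using kT(1) unfolding TG_def tau_def by blast
    have kk: "2 \<le> k" using bnd[OF kT(1)] by simp
    have "(n+1)*2 \<le> (n+1)*k" using kk by (rule mult_le_mono2)
    hence KK: "(n+1)*k + r - 2*n + 3*n = (n+1)*k + 1*(n+r)" by simp
    show ?thesis unfolding TH_def
      by (rule construct[OF assms(1) assms(3) lab ori(1) ori(2) ori(3) kT(2),
            where F = "\<lambda>x t. (n+1)*x + t - n" and a = "n+1" and b = 1 and d = n,
            OF block_inj block_rng block_lin KK])
  qed
  have lay: "k + 2*p*(n+r) \<in> TH" if kT: "k \<in> TG" "r \<le> n" for k r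
  proof -
    obtain g where lab: "edge_magic_labeling V E g k" using kT(1) unfolding TG_def tau_def by blast
    have KK: "k + 2*p*(n+r) + 3*0 = 1*k + (2*card V)*(n+r)" using p_def by simp
    show ?thesis unfolding TH_def
      by (rule construct[OF assms(1) assms(3) lab ori(1) ori(2) ori(3) kT(2),
            where F = "\<lambda>x t. x + 2*card V*t" and a = 1 and b = "2*card V" and d = 0,
            OF layer_inj layer_rng layer_lin KK])
  qed
  define kmin where "kmin = Min TG"
  define kmax where "kmax = Max TG"
  have kmin: "kmin \<in> TG" "\<And>k. k \<in> TG \<Longrightarrow> kmin \<le> k"
    using finTG neTG unfolding kmin_def by auto
  have kmax: "kmax \<in> TG" "\<And>k. k \<in> TG \<Longrightarrow> k \<le> kmax"
    using finTG neTG unfolding kmax_def by auto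
  define A where "A = (\<lambda>(k,r). (n+1)*k + r - 2*n) ` (TG \<times> {0..n})"
  define K1 where "K1 = kmin + 2*p*n"
  define K2 where "K2 = kmax + 4*p*n"
  have AT: "A \<subseteq> TH" unfolding A_def using blk by auto
  have K1T: "K1 \<in> TH" using lay[OF kmin(1), of 0] unfolding K1_def by simp
  have K2T: "K2 \<in> TH" using lay[OF kmax(1), of n] unfolding K2_def by (simp add: algebra_simps)
  have injA: "inj_on (\<lambda>(k,r). (n+1)*k + r - 2*n) (TG \<times> {0..n})"
  proof (rule inj_onI, clarify)
    fix k r k' r' assume a: "k \<in> TG" "r \<in> {0..n}" "k' \<in> TG" "r' \<in> {0..n}"
      "(n+1)*k + r - 2*n = (n+1)*k' + r' - 2*n"
    have "(n+1)*2 \<le> (n+1)*k" "(n+1)*2 \<le> (n+1)*k'" using bnd[OF a(1)] bnd[OF a(3)]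
      by (intro mult_le_mono2; simp)+
    hence "(n+1)*k + r = (n+1)*k' + r'" using a(5) by simp
    thus "k = k' \<and> r = r'" using divmod_uniq[of r "n+1" r' k k'] a by auto
  qed
  have cardA: "card A = (n+1) * card TG"
    unfolding A_def using card_image[OF injA] by (simp add: card_cartesian_product)
  have K1A: "K1 < x" if xA: "x \<in> A" for x
  proof -
    obtain k r where kr: "x = (n+1)*k + r - 2*n" "k \<in> TG" "r \<le> n" using xA unfolding A_def by auto
    have k1: "kmin \<le> k" using kmin(2)[OF kr(2)] .
    have "2*p + 3 \<le> kmin" using bnd[OF kmin(1)] by simp
    hence "n*(2*p+3) \<le> n*kmin" by (rule mult_le_mono2)
    moreover have "n*kmin \<le> n*k" using k1 by (rule mult_le_mono2)
    moreover have "n*(2*p+3) = 2*p*n + 3*n" by (simp add: algebra_simps)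
    moreover have "(n+1)*k = k + n*k" by simp
    ultimately show ?thesis using kr(1) k1 assms(5) unfolding K1_def by linarith
  qed
  have K2A: "x < K2" if xA: "x \<in> A" for x
  proof -
    obtain k r where kr: "x = (n+1)*k + r - 2*n" "k \<in> TG" "r \<le> n" using xA unfolding A_def by auto
    have k1: "k \<le> kmax" using kmax(2)[OF kr(2)] .
    have "k \<le> 4*p" using bnd[OF kr(2)] by simp
    hence "n*k \<le> n*(4*p)" by (rule mult_le_mono2)
    moreover have "n*(4*p) = 4*p*n" by simp
    moreover have "(n+1)*k = k + n*k" by simp
    moreover have "1 \<le> kmax" using bnd[OF kmax(1)] by simp
    moreover have "\<And>Y Z k km r. (Y::nat) \<le> Z \<Longrightarrow> k \<le> km \<Longrightarrow> r \<le> n \<Longrightarrow> 1 \<le> km \<Longrightarrow> 1 \<le> n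
       \<Longrightarrow> k + Y + r - 2*n < km + Z" by arith
    ultimately show ?thesis using kr(1) kr(3) k1 assms(5) unfolding K2_def by (metis add.assoc)
  qed
  have "K1 \<le> K2" unfolding K1_def K2_def using kmin(2)[OF kmax(1)] by simp
  hence K12: "K1 \<noteq> K2"
  proof -
    have "p \<ge> 1" using p_def b(1) assms(2) by (simp add: Suc_le_eq card_gt_0_iff)
    hence "2*p*n < 4*p*n" using assms(5) by simp
    thus ?thesis unfolding K1_def K2_def using kmin(2)[OF kmax(1)] by linarith
  qed
  have finA: "finite A" unfolding A_def using finTG by simp
  have cardU: "card (insert K1 (insert K2 A)) = card A + 2"
    using finA K1A K2A K12 by (simp add: card_insert_if) (meson less_irrefl)
  have finTH: "finite TH"
  proof -
    obtain v where v: "v \<in> V" using assms(2) by blast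
    define M where "M = card (corona_V V n) + card (corona_E V E n)"
    have "TH \<subseteq> {..3*M}"
    proof
      fix K assume "K \<in> TH"
      then obtain h where h: "edge_magic_labeling (corona_V V n) (corona_E V E n) h K"
        unfolding TH_def tau_def by blast
      have xy: "(v,0) \<in> corona_V V n" "(v,1) \<in> corona_V V n" using v assms(5) unfolding corona_V_def by auto
      have e: "{(v,0),(v,1)} \<in> corona_E V E n" using v assms(5) unfolding corona_E_def by blast
      have Ks: "h (Inl (v,0)) + h (Inr {(v,0),(v,1)}) + h (Inl (v,1)) = K"
        using h xy e unfolding edge_magic_labeling_def by blast
      have hb: "bij_betw h (Inl ` corona_V V n \<union> Inr ` corona_E V E n) {1..M}"
        using h unfolding edge_magic_labeling_def M_def by blast
      have "h (Inl (v,0)) \<le> M" "h (Inl (v,1)) \<le> M" "h (Inr {(v,0),(v,1)}) \<le> M"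
        using bij_betwE[OF hb] xy e by auto
      thus "K \<in> {..3*M}" using Ks by simp
    qed
    thus ?thesis using finite_subset by blast
  qed
  have "insert K1 (insert K2 A) \<subseteq> TH" using AT K1T K2T by blast
  hence "card (insert K1 (insert K2 A)) \<le> card TH" using card_mono[OF finTH] by blast
  thus ?thesis using cardU cardA unfolding TH_def TG_def by simp
qed

end
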